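(* Let $c>0$ and $P\ge 1$ be constants, and let $$\Omega=\{(u,v,L,A): 0\le A\le 1;\ u,v,L\ge 0;\ uv\le 1;\ uv\le L\le P\sqrt{uv}\},\qquad \Omega_0=\{(u,v,A): 0\le A\le 1;\ u,v\ge 0;\ uv\le 1\}.$$ There is no smooth function $B$ on $\Omega$ such that: (1) $0\le B(u,v,L,A)\le u$ on $\Omega$; (2) $\frac{\partial B}{\partial A}\ge c\,u\,L$ on $\Omega$; (3) $B$ is concave, i.e. $-d^2B\ge 0$ (the Hessian of $B$ is nonpositive definite) on $\Omega$; (4) the function $B_0(u,v,A):=\sup_{L:\,uv\le L\le P\sqrt{uv}}B(u,v,L,A)$ is concave on $\Omega_0$. *)

theory Defs
  imports "HOL-Analysis.Analysis"
begin

type_synonym pt4 = "real \<times> real \<times> real \<times> real"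
type_synonym pt3 = "real \<times> real \<times> real"

fun Ck_on :: "nat \<Rightarrow> 'a::real_normed_vector set \<Rightarrow> ('a \<Rightarrow> real) \<Rightarrow> bool" where
  "Ck_on 0 U f = continuous_on U f"
| "Ck_on (Suc k) U f = (f differentiable_on U \<and>
      (\<forall>v. Ck_on k U (\<lambda>x. frechet_derivative f (at x) v)))"

definition smooth_on :: "'a::real_normed_vector set \<Rightarrow> ('a \<Rightarrow> real) \<Rightarrow> bool" where
  "smooth_on S f \<longleftrightarrow> (\<exists>U. open U \<and> S \<subseteq> U \<and> (\<forall>k. Ck_on k U f))"

definition dderiv :: "('a::real_normed_vector \<Rightarrow> real) \<Rightarrow> 'a \<Rightarrow> 'a \<Rightarrow> real" where
  "dderiv f x h = frechet_derivative f (at x) h"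

definition hess :: "('a::real_normed_vector \<Rightarrow> real) \<Rightarrow> 'a \<Rightarrow> 'a \<Rightarrow> real" where
  "hess f x h = frechet_derivative (\<lambda>y. frechet_derivative f (at y) h) (at x) h"

text \<open>Concavity on a possibly non-convex domain: concave on every segment contained in it.\<close>
definition locally_concave_on :: "'a::real_vector set \<Rightarrow> ('a \<Rightarrow> real) \<Rightarrow> bool" where
  "locally_concave_on S f \<longleftrightarrow>
     (\<forall>x y. closed_segment x y \<subseteq> S \<longrightarrow> concave_on (closed_segment x y) f)"

definition Omega :: "real \<Rightarrow> pt4 set" where
  "Omega P = {(u, v, L, A). 0 \<le> A \<and> A \<le> 1 \<and> 0 \<le> u \<and> 0 \<le> v \<and> 0 \<le> L \<and> u * v \<le> 1
               \<and> u * v \<le> L \<and> L \<le> P * sqrt (u * v)}"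

definition Omega0 :: "pt3 set" where
  "Omega0 = {(u, v, A). 0 \<le> A \<and> A \<le> 1 \<and> 0 \<le> u \<and> 0 \<le> v \<and> u * v \<le> 1}"

definition B0 :: "real \<Rightarrow> (pt4 \<Rightarrow> real) \<Rightarrow> pt3 \<Rightarrow> real" where
  "B0 P B = (\<lambda>(u, v, A). Sup {B (u, v, L, A) | L. u * v \<le> L \<and> L \<le> P * sqrt (u * v)})"

end

theory Submission
  imports Defs
begin
lemma incA:
  fixes B :: "pt4 \<Rightarrow> real"
  assumes sm: "smooth_on (Omega P) B"
    and der: "\<forall>u v L A. (u, v, L, A) \<in> Omega P \<longrightarrow> dderiv B (u, v, L, A) (0, 0, 0, 1) \<ge> c * u * L"
    and mem: "\<And>A. 0 \<le> A \<Longrightarrow> A \<le> 1 \<Longrightarrow> (u, v, L, A) \<in> Omega P"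
  shows "B (u, v, L, 1) - c*u*L*1 \<ge> B (u, v, L, 3/4) - c*u*L*(3/4)"
proof -
  obtain U where U: "open U" "Omega P \<subseteq> U" "\<forall>k. Ck_on k U B"
    using sm unfolding smooth_on_def by blast
  have "Ck_on (Suc 0) U B" using U(3) by blast
  then have dU: "B differentiable_on U" by simp
  show ?thesis
  proof (rule DERIV_nonneg_imp_nondecreasing[where f="\<lambda>A. B (u, v, L, A) - c*u*L*A"])
    fix A :: real assume A: "3/4 \<le> A" "A \<le> 1"
    define x where "x = (u, v, L, A)"
    have xU: "x \<in> U" using mem[of A] A U(2) x_def by auto
    have "B differentiable (at x)"
      using dU xU U(1) differentiable_on_eq_differentiable_at by blast
    then have hd: "(B has_derivative frechet_derivative B (at x)) (at x)"
      using frechet_derivative_works by blast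
    have lin: "linear (frechet_derivative B (at x))"
      using hd has_derivative_linear by blast
    have hp: "((\<lambda>t::real. (u, v, L, t)) has_derivative (\<lambda>h. (0, 0, 0, h))) (at A)"
      by (intro derivative_eq_intros) auto
    have hc: "((\<lambda>t. B (u, v, L, t)) has_derivative (\<lambda>h. frechet_derivative B (at x) (0, 0, 0, h))) (at A)"
      using has_derivative_compose[OF hp, of B] hd x_def by (simp add: o_def)
    have eq: "(\<lambda>h. frechet_derivative B (at x) (0, 0, 0, h)) = (\<lambda>h. dderiv B x (0,0,0,1) * h)"
    proof
      fix h :: real
      have "(0::real, 0::real, 0::real, h) = h *\<^sub>R (0, 0, 0, 1)" by simp
      then show "frechet_derivative B (at x) (0, 0, 0, h) = dderiv B x (0,0,0,1) * h"
        using linear_scale[OF lin, of h "(0,0,0,1)"] by (simp add: dderiv_def)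
    qed
    have "((\<lambda>t. B (u, v, L, t)) has_field_derivative dderiv B x (0,0,0,1)) (at A)"
      using hc unfolding eq has_field_derivative_def .
    then have "((\<lambda>t. B (u, v, L, t) - c*u*L*t) has_field_derivative (dderiv B x (0,0,0,1) - c*u*L)) (at A)"
      by (intro derivative_eq_intros) auto
    moreover have "dderiv B x (0,0,0,1) - c*u*L \<ge> 0"
      using der mem[of A] A x_def by force
    ultimately show "\<exists>y. ((\<lambda>A. B (u, v, L, A) - c*u*L*A) has_real_derivative y) (at A) \<and> 0 \<le> y" by blast
  qed simp
qed

lemma sqrt_ge_self: "w \<le> sqrt w" if "0 \<le> (w::real)" "w \<le> 1"
proof -
  have s: "0 \<le> sqrt w" "sqrt w \<le> 1" using that by auto
  have "w = sqrt w * sqrt w" using that by simp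
  also have "\<dots> \<le> sqrt w * 1" using s by (intro mult_left_mono) auto
  finally show ?thesis by simp
qed

lemma memO:
  fixes u v L A P :: real
  assumes "0 \<le> u" "0 \<le> v" "u * v \<le> 1" "u * v \<le> L" "L \<le> P * sqrt (u * v)" "0 \<le> A" "A \<le> 1"
  shows "(u, v, L, A) \<in> Omega P"
  using assms by (auto simp: Omega_def intro: order_trans[OF mult_nonneg_nonneg])

lemma b_facts:
  fixes B :: "pt4 \<Rightarrow> real"
  assumes P: "P \<ge> 1"
    and bnd: "\<forall>u v L A. (u, v, L, A) \<in> Omega P \<longrightarrow> 0 \<le> B (u, v, L, A) \<and> B (u, v, L, A) \<le> u"
    and uv: "0 \<le> u" "0 \<le> v" "u * v \<le> 1" "0 \<le> A" "A \<le> 1"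
  shows "B0 P B (u, v, A) \<le> u" "0 \<le> B0 P B (u, v, A)"
    "\<And>L. u * v \<le> L \<Longrightarrow> L \<le> P * sqrt (u * v) \<Longrightarrow> B (u, v, L, A) \<le> B0 P B (u, v, A)"
proof -
  define S where "S = {B (u, v, L, A) | L. u * v \<le> L \<and> L \<le> P * sqrt (u * v)}"
  have b: "B0 P B (u, v, A) = Sup S" by (simp add: B0_def S_def)
  have w0: "0 \<le> u * v" using uv by simp
  have "u * v \<le> sqrt (u * v)" using sqrt_ge_self[OF w0 uv(3)] .
  also have "\<dots> \<le> P * sqrt (u * v)" using P w0 by (simp add: mult_le_cancel_right1)
  finally have ne: "u * v \<le> P * sqrt (u * v)" .
  have inS: "B (u, v, u * v, A) \<in> S" using ne S_def by auto
  have ub: "\<And>y. y \<in> S \<Longrightarrow> y \<le> u" using bnd memO[OF uv(1,2,3) _ _ uv(4,5)] S_def by fastforce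
  have bdd: "bdd_above S" using ub by (auto simp: bdd_above_def)
  show "B0 P B (u, v, A) \<le> u" unfolding b by (rule cSup_least) (use inS ub in auto)
  show "\<And>L. u * v \<le> L \<Longrightarrow> L \<le> P * sqrt (u * v) \<Longrightarrow> B (u, v, L, A) \<le> B0 P B (u, v, A)"
    unfolding b by (rule cSup_upper) (use bdd S_def in auto)
  have "0 \<le> B (u, v, u * v, A)" using bnd memO[OF uv(1,2,3) order_refl ne uv(4,5)] by blast
  then show "0 \<le> B0 P B (u, v, A)" unfolding b using cSup_upper[OF inS bdd] by linarith
qed


lemma b_inc:
  fixes B :: "pt4 \<Rightarrow> real"
  assumes P: "P \<ge> 1" and c: "c > 0"
    and sm: "smooth_on (Omega P) B"
    and bnd: "\<forall>u v L A. (u, v, L, A) \<in> Omega P \<longrightarrow> 0 \<le> B (u, v, L, A) \<and> B (u, v, L, A) \<le> u"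
    and der: "\<forall>u v L A. (u, v, L, A) \<in> Omega P \<longrightarrow> dderiv B (u, v, L, A) (0, 0, 0, 1) \<ge> c * u * L"
    and uv: "0 \<le> u" "0 \<le> v" "u * v \<le> 1"
  shows "B0 P B (u, v, 3/4) \<le> B0 P B (u, v, 1) - c * u * (u * v) / 4"
proof -
  define S where "S = {B (u, v, L, 3/4) | L. u * v \<le> L \<and> L \<le> P * sqrt (u * v)}"
  have b: "B0 P B (u, v, 3/4) = Sup S" by (simp add: B0_def S_def)
  have w0: "0 \<le> u * v" using uv by simp
  have "u * v \<le> sqrt (u * v)" using sqrt_ge_self[OF w0 uv(3)] .
  also have "\<dots> \<le> P * sqrt (u * v)" using P w0 by (simp add: mult_le_cancel_right1)
  finally have ne: "u * v \<le> P * sqrt (u * v)" .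
  have inS: "B (u, v, u * v, 3/4) \<in> S" using ne S_def by auto
  have "\<And>y. y \<in> S \<Longrightarrow> y \<le> B0 P B (u, v, 1) - c * u * (u * v) / 4"
  proof -
    fix y assume "y \<in> S"
    then obtain L where L: "u * v \<le> L" "L \<le> P * sqrt (u * v)" "y = B (u, v, L, 3/4)"
      using S_def by auto
    have "B (u, v, L, 3/4) - c*u*L*(3/4) \<le> B (u, v, L, 1) - c*u*L*1"
      by (rule incA[OF sm der]) (use memO[OF uv L(1,2)] in auto)
    moreover have "B (u, v, L, 1) \<le> B0 P B (u, v, 1)"
      using b_facts(3)[OF P bnd uv _ _ L(1,2)] by simp
    moreover have "c * u * (u * v) \<le> c * u * L"
      using L(1) c uv by (intro mult_left_mono) auto
    ultimately show "y \<le> B0 P B (u, v, 1) - c * u * (u * v) / 4" using L(3) by linarith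
  qed
  then show ?thesis unfolding b by (rule cSup_least[rotated]) (use inS in auto)
qed

lemma b_conc:
  assumes lc: "locally_concave_on Omega0 b"
    and seg: "closed_segment x y \<subseteq> Omega0" and t: "0 \<le> t" "t \<le> 1"
  shows "b ((1 - t) *\<^sub>R x + t *\<^sub>R y) \<ge> (1 - t) * b x + t * b y"
proof -
  have "concave_on (closed_segment x y) b" using lc seg unfolding locally_concave_on_def by blast
  then show ?thesis using concave_onD t by (metis ends_in_segment(1) ends_in_segment(2))
qed


lemma seg1:
  fixes u v :: real
  assumes "0 < u" "0 \<le> v" "u * v = 3/4"
  shows "closed_segment (0, v, 0) (4*u/3, v, 1) \<subseteq> Omega0"
proof
  fix z assume "z \<in> closed_segment (0::real, v, 0::real) (4*u/3, v, 1)"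
  then obtain t where t: "0 \<le> t" "t \<le> 1" "z = (1 - t) *\<^sub>R (0, v, 0) + t *\<^sub>R (4*u/3, v, 1)"
    unfolding closed_segment_def by blast
  have "t * (4 * u / 3) * v = t" using assms by (simp add: field_simps)
  then show "z \<in> Omega0" using t assms by (auto simp: Omega0_def algebra_simps)
qed

lemma seg2:
  fixes u v :: real
  assumes "0 < u" "0 \<le> v" "u * v = 3/4"
  shows "closed_segment (0, 2* v, 3/4) (2*u, v/2, 3/4) \<subseteq> Omega0"
proof
  fix z assume "z \<in> closed_segment (0::real, 2* v, 3/4::real) (2*u, v/2, 3/4)"
  then obtain t where t: "0 \<le> t" "t \<le> 1" "z = (1 - t) *\<^sub>R (0, 2* v, 3/4) + t *\<^sub>R (2*u, v/2, 3/4)"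
    unfolding closed_segment_def by blast
  have e: "t * (2 * u) * ((1 - t) * (2 * v) + t * (v / 2)) = (3/4) * (t * (4 - 3 * t))"
  proof -
    have "t * (2 * u) * ((1 - t) * (2 * v) + t * (v / 2)) = (u * v) * (t * (4 - 3 * t))"
      by (simp add: algebra_simps)
    then show ?thesis using assms(3) by simp
  qed
  have "(3/4) * (t * (4 - 3 * t)) \<le> 1" proof -
    have "0 \<le> (3*t - 2)^2" by simp
    then show ?thesis by (simp add: power2_eq_square algebra_simps)
  qed
  then have "t * (2 * u) * ((1 - t) * (2 * v) + t * (v / 2)) \<le> 1" unfolding e .
  moreover have "0 \<le> (1 - t) * (2 * v) + t * (v / 2)" using t assms by auto
  ultimately show "z \<in> Omega0" using t assms by (auto simp: Omega0_def field_simps)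
qed


lemma b_step:
  fixes B :: "pt4 \<Rightarrow> real"
  assumes P: "P \<ge> 1" and c: "c > 0"
    and sm: "smooth_on (Omega P) B"
    and bnd: "\<forall>u v L A. (u, v, L, A) \<in> Omega P \<longrightarrow> 0 \<le> B (u, v, L, A) \<and> B (u, v, L, A) \<le> u"
    and der: "\<forall>u v L A. (u, v, L, A) \<in> Omega P \<longrightarrow> dderiv B (u, v, L, A) (0, 0, 0, 1) \<ge> c * u * L"
    and lc: "locally_concave_on Omega0 (B0 P B)"
    and uv: "0 < u" "0 \<le> v" "u * v = 3/4"
  shows "B0 P B (2*u, v/2, 3/4) \<le> 2 * B0 P B (u, v, 3/4) - c * u / 2"
proof -
  have p1: "(1 - 3/4) *\<^sub>R (0::real, v, 0::real) + (3/4) *\<^sub>R (4*u/3, v, 1) = (u, v, 3/4)"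
    by (simp add: algebra_simps)
  have h1: "B0 P B (u, v, 3/4) \<ge> (1/4) * B0 P B (0, v, 0) + (3/4) * B0 P B (4*u/3, v, 1)"
    using b_conc[OF lc seg1[OF uv], of "3/4"] p1 by simp
  have h2: "B0 P B (0, v, 0) \<ge> 0" using b_facts(2)[OF P bnd, of 0 v 0] uv by simp
  have w1: "(4*u/3) * v = 1" using uv by (simp add: field_simps)
  have h3: "B0 P B (4*u/3, v, 3/4) \<le> B0 P B (4*u/3, v, 1) - c * (4*u/3) * ((4*u/3) * v) / 4"
    using b_inc[OF P c sm bnd der, of "4*u/3" v] uv w1 by simp
  have h3': "B0 P B (4*u/3, v, 3/4) \<le> B0 P B (4*u/3, v, 1) - c * u / 3"
    using h3 unfolding w1 by simp
  have p2: "(1 - 2/3) *\<^sub>R (0::real, 2 * v, 3/4::real) + (2/3) *\<^sub>R (2*u, v/2, 3/4) = (4*u/3, v, 3/4)"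
    by (simp add: algebra_simps)
  have h4: "B0 P B (4*u/3, v, 3/4) \<ge> (1/3) * B0 P B (0, 2 * v, 3/4) + (2/3) * B0 P B (2*u, v/2, 3/4)"
    using b_conc[OF lc seg2[OF uv], of "2/3"] p2 by simp
  have h5: "B0 P B (0, 2 * v, 3/4) \<ge> 0" using b_facts(2)[OF P bnd, of 0 "2 * v" "3/4"] uv by simp
  have q1: "B0 P B (2*u, v/2, 3/4) \<le> (3/2) * B0 P B (4*u/3, v, 3/4)" using h4 h5 by linarith
  have q2: "B0 P B (4*u/3, v, 1) \<le> (4/3) * B0 P B (u, v, 3/4)" using h1 h2 by linarith
  show ?thesis using q1 q2 h3' by linarith
qed

lemma b_iter:
  fixes B :: "pt4 \<Rightarrow> real"
  assumes P: "P \<ge> 1" and c: "c > 0"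
    and sm: "smooth_on (Omega P) B"
    and bnd: "\<forall>u v L A. (u, v, L, A) \<in> Omega P \<longrightarrow> 0 \<le> B (u, v, L, A) \<and> B (u, v, L, A) \<le> u"
    and der: "\<forall>u v L A. (u, v, L, A) \<in> Omega P \<longrightarrow> dderiv B (u, v, L, A) (0, 0, 0, 1) \<ge> c * u * L"
    and lc: "locally_concave_on Omega0 (B0 P B)"
  shows "B0 P B (2^n, 3 / (4 * 2^n), 3/4) \<le> 2^n * (1 - real n * c / 4)"
proof (induction n)
  case 0
  then show ?case using b_facts(1)[OF P bnd, of 1 "3/4" "3/4"] by simp
next
  case (Suc n)
  have uv: "(0::real) < 2^n" "0 \<le> 3 / (4 * (2::real)^n)" "2^n * (3 / (4 * 2^n)) = (3/4::real)" by auto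
  have e: "((2 * 2^n, 3 / (4 * 2^n) / 2, 3/4) :: real \<times> real \<times> real) = ((2::real)^Suc n, 3 / (4 * 2^Suc n), 3/4::real)" by simp
  have "B0 P B (2^Suc n, 3 / (4 * 2^Suc n), 3/4) \<le> 2 * B0 P B (2^n, 3 / (4 * 2^n), 3/4) - c * 2^n / 2"
    using b_step[OF P c sm bnd der lc uv] unfolding e by simp
  also have "\<dots> \<le> 2 * (2^n * (1 - real n * c / 4)) - c * 2^n / 2" using Suc by simp
  also have "\<dots> = 2^Suc n * (1 - real (Suc n) * c / 4)" by (simp add: algebra_simps)
  finally show ?case .
qed

theorem mainTheorem5:
  fixes c P :: real
  assumes "c > 0" and "P \<ge> 1"
  shows "\<not> (\<exists>B :: pt4 \<Rightarrow> real.
            smooth_on (Omega P) B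
          \<and> (\<forall>u v L A. (u, v, L, A) \<in> Omega P \<longrightarrow> 0 \<le> B (u, v, L, A) \<and> B (u, v, L, A) \<le> u)
          \<and> (\<forall>u v L A. (u, v, L, A) \<in> Omega P \<longrightarrow>
                 dderiv B (u, v, L, A) (0, 0, 0, 1) \<ge> c * u * L)
          \<and> (\<forall>x \<in> Omega P. \<forall>h. hess B x h \<le> 0)
          \<and> locally_concave_on Omega0 (B0 P B))"
proof
  assume "\<exists>B :: pt4 \<Rightarrow> real.
            smooth_on (Omega P) B
          \<and> (\<forall>u v L A. (u, v, L, A) \<in> Omega P \<longrightarrow> 0 \<le> B (u, v, L, A) \<and> B (u, v, L, A) \<le> u)
          \<and> (\<forall>u v L A. (u, v, L, A) \<in> Omega P \<longrightarrow>
                 dderiv B (u, v, L, A) (0, 0, 0, 1) \<ge> c * u * L)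
          \<and> (\<forall>x \<in> Omega P. \<forall>h. hess B x h \<le> 0)
          \<and> locally_concave_on Omega0 (B0 P B)"
  then obtain B :: "pt4 \<Rightarrow> real" where sm: "smooth_on (Omega P) B"
    and bnd: "\<forall>u v L A. (u, v, L, A) \<in> Omega P \<longrightarrow> 0 \<le> B (u, v, L, A) \<and> B (u, v, L, A) \<le> u"
    and der: "\<forall>u v L A. (u, v, L, A) \<in> Omega P \<longrightarrow> dderiv B (u, v, L, A) (0, 0, 0, 1) \<ge> c * u * L"
    and lc: "locally_concave_on Omega0 (B0 P B)"
    by blast
  obtain n :: nat where n: "4 / c < real n" using reals_Archimedean2 by blast
  have "real n * c > 4" using n \<open>c > 0\<close> by (simp add: field_simps)
  then have neg: "(2::real)^n * (1 - real n * c / 4) < 0" by (simp add: mult_pos_neg)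
  have "B0 P B (2^n, 3 / (4 * 2^n), 3/4) \<le> 2^n * (1 - real n * c / 4)"
    using b_iter[OF \<open>P \<ge> 1\<close> \<open>c > 0\<close> sm bnd der lc] .
  moreover have "0 \<le> B0 P B (2^n, 3 / (4 * 2^n), 3/4)"
    using b_facts(2)[OF \<open>P \<ge> 1\<close> bnd, of "2^n" "3 / (4 * 2^n)" "3/4"] by simp
  ultimately show False using neg by linarith
qed

end
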